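(* Let $M$ be a finite-dimensional smooth manifold and $E$ a locally convex space. If a sequence $(f_n)_{n\in\mathbb{N}}$ in $C^\infty_{vS}(M,E)$ converges in the very strong topology to $f\in C^\infty(M,E)$, then there exist a compact set $K\subseteq M$ and $N\in\mathbb{N}$ such that $\{y\in M: f_n(y)\neq f(y)\}\subseteq K$ for all $n\geq N$.
   Context: Conventions: finite-dimensional manifolds are smooth, Hausdorff and $\sigma$-compact. Locally convex spaces are real Hausdorff locally convex topological vector spaces; differentiability is in the sense of Bastiani (Keller $C^r$-theory): for $U\subseteq E$ open and $f\colon U\to F$, $d^{(k)}f(x;y_1,\dots,y_k)=D_{y_k}\cdots D_{y_1}f(x)$ is the iterated directional derivative, and $f$ is smooth if all these exist and are continuous on $U\times E^k$ (and $f$ is continuous); manifolds modeled on locally convex spaces and smooth maps between them are defined via charts with smooth transition maps. Let $M$ be a finite-dimensional manifold of dimension $m$ and $e_1,\dots,e_m$ the standard basis of $\mathbb{R}^m$. For a locally convex space $E$, a continuous seminorm $p$ on $E$, an open $W\subseteq\mathbb{R}^m$, a smooth $g\colon W\to E$, a compact $A\subseteq W$ and $r\in\mathbb{N}_0$ put $\|g\|(r,A,p)=\sup\{p(d^{(k)}g(a;\alpha)) : a\in A,\ \alpha\in\{e_1,\dots,e_m\}^k,\ 0\le k\le r\}$ (for $E=\mathbb{R}^n$ one takes $p=\|\cdot\|_\infty$ and writes $\|g\|(r,A)$). For a manifold $X$ modeled on $E$, $f\in C^\infty(M,X)$, a chart $(U,\phi)$ of $M$, a compact $A\subseteq U$,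 a chart $(V,\psi)$ of $X$ with $f(A)\subseteq V$, a continuous seminorm $p$ on $E$, $r\in\mathbb{N}_0$ and $\epsilon>0$, the elementary neighborhood is $\mathcal{N}^r(f;A,(U,\phi),(V,\psi),p,\epsilon)=\{h\in C^\infty(M,X): h(A)\subseteq V,\ \|\psi\circ h\circ\phi^{-1}-\psi\circ f\circ\phi^{-1}\|(r,\phi(A),p)<\epsilon\}$. A basic neighborhood of $f$ is an intersection $\bigcap_{i\in\Lambda}\mathcal{N}^{r_i}(f;A_i,(U_i,\phi_i),(V_i,\psi_i),p_i,\epsilon_i)$ of elementary neighborhoods of $f$ such that the family $\{A_i\}_{i\in\Lambda}$ is locally finite in $M$. The very strong topology on $C^\infty(M,X)$ is the topology with the basic neighborhoods (of all $f$) as a basis; $C^\infty_{vS}(M,X)$ denotes $C^\infty(M,X)$ with this topology. When source or target is a vector space, its identity chart is used and omitted from the notation. *)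

theory Defs
  imports "HOL-Analysis.Analysis"
begin

definition seminorm :: "('e::real_vector \<Rightarrow> real) \<Rightarrow> bool" where
  "seminorm p \<longleftrightarrow> (\<forall>x y. p (x + y) \<le> p x + p y) \<and> (\<forall>c x. p (c *\<^sub>R x) = \<bar>c\<bar> * p x)"

definition continuous_seminorm :: "('e::{real_vector,topological_space} \<Rightarrow> real) \<Rightarrow> bool" where
  "continuous_seminorm p \<longleftrightarrow> seminorm p \<and> continuous_on UNIV p"

definition locally_convex_space :: "'e::{real_vector,t2_space} itself \<Rightarrow> bool" where
  "locally_convex_space _ \<longleftrightarrow>
     (\<exists>P :: ('e \<Rightarrow> real) set.
        (\<forall>p\<in>P. seminorm p) \<and>
        (\<forall>x. x \<noteq> 0 \<longrightarrow> (\<exists>p\<in>P. p x \<noteq> 0)) \<and>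
        (\<forall>U :: 'e set. open U \<longleftrightarrow>
           (\<forall>x\<in>U. \<exists>F. finite F \<and> F \<subseteq> P \<and> (\<exists>\<epsilon>>0. {y. \<forall>p\<in>F. p (y - x) < \<epsilon>} \<subseteq> U))))"

definition dirderiv :: "('a::real_vector \<Rightarrow> 'e::{real_vector,t2_space}) \<Rightarrow> 'a \<Rightarrow> 'a \<Rightarrow> 'e" where
  "dirderiv g y x = Lim (at (0::real)) (\<lambda>t. (1 / t) *\<^sub>R (g (x + t *\<^sub>R y) - g x))"

definition has_dirderiv :: "('a::real_vector \<Rightarrow> 'e::{real_vector,t2_space}) \<Rightarrow> 'a \<Rightarrow> 'a \<Rightarrow> bool" where
  "has_dirderiv g y x \<longleftrightarrow> (\<exists>v. ((\<lambda>t::real. (1 / t) *\<^sub>R (g (x + t *\<^sub>R y) - g x)) \<longlongrightarrow> v) (at 0))"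

text \<open>ddiff g [y1,...,yk] x = d^(k) g (x; y1,...,yk) = D_yk ... D_y1 g (x).\<close>
fun ddiff :: "('a::real_vector \<Rightarrow> 'e::{real_vector,t2_space}) \<Rightarrow> 'a list \<Rightarrow> 'a \<Rightarrow> 'e" where
  "ddiff g [] = g"
| "ddiff g (y # ys) = ddiff (dirderiv g y) ys"

text \<open>Bastiani smoothness of g on the open set W: all iterated directional derivatives exist on W
  and (x, y1, ..., yk) \<mapsto> d^(k) g (x; y1, ..., yk) is continuous on W \<times> E^k
  (E^k is encoded as sequences vanishing from index k on, with the product topology).\<close>
definition bsmooth_on :: "('a::{real_vector,topological_space}) set \<Rightarrow> ('a \<Rightarrow> 'e::{real_vector,t2_space}) \<Rightarrow> bool" where
  "bsmooth_on W g \<longleftrightarrow> open W \<and>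
     (\<forall>ys y x. x \<in> W \<longrightarrow> has_dirderiv (ddiff g ys) y x) \<and>
     (\<forall>k. continuous_on (W \<times> {ys :: nat \<Rightarrow> 'a. \<forall>i\<ge>k. ys i = 0})
            (\<lambda>(x, ys). ddiff g (map ys [0..<k]) x))"

definition is_chart :: "('m::topological_space set \<times> ('m \<Rightarrow> real^'n)) \<Rightarrow> bool" where
  "is_chart c \<longleftrightarrow> open (fst c) \<and> open (snd c ` fst c) \<and>
     homeomorphism (fst c) (snd c ` fst c) (snd c) (inv_into (fst c) (snd c))"

definition charts_compatible :: "('m::topological_space set \<times> ('m \<Rightarrow> real^'n)) \<Rightarrow> ('m set \<times> ('m \<Rightarrow> real^'n)) \<Rightarrow> bool" where
  "charts_compatible c d \<longleftrightarrow>
     bsmooth_on (snd c ` (fst c \<inter> fst d)) (snd d \<circ> inv_into (fst c) (snd c))"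

text \<open>The whole type 'm is the manifold: Hausdorff (class), sigma-compact, with a smooth atlas A.\<close>
definition smooth_manifold :: "('m::t2_space set \<times> ('m \<Rightarrow> real^'n)) set \<Rightarrow> bool" where
  "smooth_manifold A \<longleftrightarrow>
     (\<exists>Ks :: nat \<Rightarrow> 'm set. (\<forall>i. compact (Ks i)) \<and> (\<Union>i. Ks i) = UNIV) \<and>
     (\<forall>c\<in>A. is_chart c) \<and> (\<Union>c\<in>A. fst c) = UNIV \<and>
     (\<forall>c\<in>A. \<forall>d\<in>A. charts_compatible c d)"

text \<open>Charts of the manifold = charts of the maximal atlas determined by A.\<close>
definition manifold_chart :: "('m::t2_space set \<times> ('m \<Rightarrow> real^'n)) set \<Rightarrow> ('m set \<times> ('m \<Rightarrow> real^'n)) \<Rightarrow> bool" where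
  "manifold_chart A c \<longleftrightarrow> is_chart c \<and> (\<forall>d\<in>A. charts_compatible c d \<and> charts_compatible d c)"

definition smooth_map :: "('m::t2_space set \<times> ('m \<Rightarrow> real^'n)) set \<Rightarrow> ('m \<Rightarrow> 'e::{real_vector,t2_space}) \<Rightarrow> bool" where
  "smooth_map A f \<longleftrightarrow> (\<forall>c\<in>A. bsmooth_on (snd c ` fst c) (f \<circ> inv_into (fst c) (snd c)))"

text \<open>The 0 is inserted only to make the supremum of the empty family 0 (all values are \<ge> 0).\<close>
definition cnorm :: "(real^'n \<Rightarrow> 'e::{real_vector,t2_space}) \<Rightarrow> nat \<Rightarrow> (real^'n) set \<Rightarrow> ('e \<Rightarrow> real) \<Rightarrow> real" where
  "cnorm g r K p = Sup (insert 0 {p (ddiff g \<alpha> a) | a \<alpha>. a \<in> K \<and> length \<alpha> \<le> r \<and> set \<alpha> \<subseteq> Basis})"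

text \<open>Elementary neighbourhood N^r(f; K, (U,phi), p, eps) (target E with identity chart).\<close>
definition elem_nbhd :: "('m::t2_space set \<times> ('m \<Rightarrow> real^'n)) set \<Rightarrow> ('m \<Rightarrow> 'e::{real_vector,t2_space})
     \<Rightarrow> 'm set \<Rightarrow> ('m set \<times> ('m \<Rightarrow> real^'n)) \<Rightarrow> ('e \<Rightarrow> real) \<Rightarrow> nat \<Rightarrow> real \<Rightarrow> ('m \<Rightarrow> 'e) set" where
  "elem_nbhd A f K c p r \<epsilon> =
     {h. smooth_map A h \<and>
         cnorm (\<lambda>x. h (inv_into (fst c) (snd c) x) - f (inv_into (fst c) (snd c) x)) r (snd c ` K) p < \<epsilon>}"

definition elem_data_ok :: "('m::t2_space set \<times> ('m \<Rightarrow> real^'n)) set \<Rightarrow>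
     ('m set \<times> ('m set \<times> ('m \<Rightarrow> real^'n)) \<times> ('e::{real_vector,t2_space} \<Rightarrow> real) \<times> nat \<times> real) \<Rightarrow> bool" where
  "elem_data_ok A s = (case s of (K, c, p, r, \<epsilon>) \<Rightarrow>
     manifold_chart A c \<and> compact K \<and> K \<subseteq> fst c \<and> continuous_seminorm p \<and> \<epsilon> > 0)"

definition basic_nbhd :: "('m::t2_space set \<times> ('m \<Rightarrow> real^'n)) set \<Rightarrow> ('m \<Rightarrow> 'e::{real_vector,t2_space}) \<Rightarrow> ('m \<Rightarrow> 'e) set \<Rightarrow> bool" where
  "basic_nbhd A f B \<longleftrightarrow> smooth_map A f \<and>
     (\<exists>S :: ('m set \<times> ('m set \<times> ('m \<Rightarrow> real^'n)) \<times> ('e \<Rightarrow> real) \<times> nat \<times> real) set.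
        (\<forall>s\<in>S. elem_data_ok A s) \<and>
        (\<forall>x. \<exists>W. open W \<and> x \<in> W \<and> finite {s\<in>S. fst s \<inter> W \<noteq> {}}) \<and>
        B = {h. smooth_map A h} \<inter>
            (\<Inter>s\<in>S. case s of (K, c, p, r, \<epsilon>) \<Rightarrow> elem_nbhd A f K c p r \<epsilon>))"

definition vS_open :: "('m::t2_space set \<times> ('m \<Rightarrow> real^'n)) set \<Rightarrow> ('m \<Rightarrow> 'e::{real_vector,t2_space}) set \<Rightarrow> bool" where
  "vS_open A Q \<longleftrightarrow> Q \<subseteq> {h. smooth_map A h} \<and>
     (\<forall>h\<in>Q. \<exists>f B. basic_nbhd A f B \<and> h \<in> B \<and> B \<subseteq> Q)"

definition vS_tendsto :: "('m::t2_space set \<times> ('m \<Rightarrow> real^'n)) set \<Rightarrow> (nat \<Rightarrow> 'm \<Rightarrow> 'e::{real_vector,t2_space}) \<Rightarrow> ('m \<Rightarrow> 'e) \<Rightarrow> bool" where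
  "vS_tendsto A fs f \<longleftrightarrow> (\<forall>Q. vS_open A Q \<and> f \<in> Q \<longrightarrow> (\<forall>\<^sub>F n in sequentially. fs n \<in> Q))"

end

theory Submission
  imports Defs
begin

lemma seminorm_zero: "seminorm p \<Longrightarrow> p 0 = 0"
  unfolding seminorm_def by (metis abs_zero mult_zero_left scale_zero_left)

lemma seminorm_neg: "seminorm p \<Longrightarrow> p (- x) = p x"
  unfolding seminorm_def by (metis abs_minus_cancel abs_one mult_1 scaleR_minus1_left)

lemma seminorm_nonneg: "seminorm p \<Longrightarrow> p x \<ge> 0"
proof -
  assume s: "seminorm p"
  have "p (x + - x) \<le> p x + p (- x)" using s unfolding seminorm_def by blast
  thus ?thesis using seminorm_zero[OF s] seminorm_neg[OF s, of x] by simp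
qed

lemma seminorm_diff: "seminorm p \<Longrightarrow> \<bar>p y - p x\<bar> \<le> p (y - x)"
proof -
  assume s: "seminorm p"
  have 1: "p (x + (y - x)) \<le> p x + p (y - x)" using s unfolding seminorm_def by blast
  have 2: "p (y + (x - y)) \<le> p y + p (x - y)" using s unfolding seminorm_def by blast
  have "p (x - y) = p (y - x)" using seminorm_neg[OF s, of "y - x"] by simp
  thus ?thesis using 1 2 by simp
qed

lemma lcs_cont:
  assumes "\<forall>U :: 'e::{real_vector,t2_space} set. open U \<longleftrightarrow>
           (\<forall>x\<in>U. \<exists>F. finite F \<and> F \<subseteq> P \<and> (\<exists>\<epsilon>>0. {y. \<forall>p\<in>F. p (y - x) < \<epsilon>} \<subseteq> U))"
    and "p \<in> P" and "seminorm p"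
  shows "continuous_seminorm p"
  unfolding continuous_seminorm_def
proof (intro conjI assms(3))
  show "continuous_on UNIV p"
    unfolding continuous_on_open_vimage[OF open_UNIV]
  proof (intro allI impI)
    fix B :: "real set" assume B: "open B"
    have "\<forall>x\<in>p -` B. \<exists>F. finite F \<and> F \<subseteq> P \<and> (\<exists>\<epsilon>>0. {y. \<forall>q\<in>F. q (y - x) < \<epsilon>} \<subseteq> p -` B)"
    proof
      fix x assume "x \<in> p -` B"
      then obtain e where e: "e > 0" "ball (p x) e \<subseteq> B" using B openE by blast
      have "{y. \<forall>q\<in>{p}. q (y - x) < e} \<subseteq> p -` B"
      proof
        fix y assume "y \<in> {y. \<forall>q\<in>{p}. q (y - x) < e}"
        hence "p (y - x) < e" by simp
        hence "dist (p y) (p x) < e" using seminorm_diff[OF assms(3), of y x] by (simp add: dist_real_def)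
        thus "y \<in> p -` B" using e by (auto simp: dist_commute)
      qed
      thus "\<exists>F. finite F \<and> F \<subseteq> P \<and> (\<exists>\<epsilon>>0. {y. \<forall>q\<in>F. q (y - x) < \<epsilon>} \<subseteq> p -` B)"
        using e assms(2) by (intro exI[of _ "{p}"]) auto
    qed
    thus "open (p -` B \<inter> UNIV)" using assms(1) by simp
  qed
qed

lemma cnorm0: "cnorm g 0 {a} p = max 0 (p (g a))"
proof -
  have "{p (ddiff g \<alpha> a') | a' \<alpha>. a' \<in> {a} \<and> length \<alpha> \<le> 0 \<and> set \<alpha> \<subseteq> Basis} = {p (g a)}"
    by auto
  thus ?thesis unfolding cnorm_def by (simp add: cSup_insert max_def sup_real_def)
qed

lemma chart_local_compact:
  assumes "is_chart c" "x \<in> fst c"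
  shows "\<exists>W C. open W \<and> x \<in> W \<and> W \<subseteq> C \<and> compact C"
proof -
  define U where "U = fst c"
  define \<phi> where "\<phi> = snd c"
  define \<psi> where "\<psi> = inv_into U \<phi>"
  have oU: "open U" and oV: "open (\<phi> ` U)" and h: "homeomorphism U (\<phi> ` U) \<phi> \<psi>"
    using assms(1) unfolding is_chart_def U_def \<phi>_def \<psi>_def by auto
  have h2: "homeomorphism (\<phi> ` U) U \<psi> \<phi>" using h homeomorphism_sym by blast
  have xU: "x \<in> U" using assms(2) U_def by simp
  then obtain e where e: "e > 0" "cball (\<phi> x) e \<subseteq> \<phi> ` U"
    using oV open_contains_cball by blast
  have "openin (top_of_set (\<phi> ` U)) (ball (\<phi> x) e)"
    using e by (intro open_openin_trans[OF oV]) auto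
  hence "openin (top_of_set U) (\<psi> ` ball (\<phi> x) e)"
    by (rule homeomorphism_imp_open_map[OF h2])
  hence o: "open (\<psi> ` ball (\<phi> x) e)" using oU openin_open_trans by blast
  have cont: "continuous_on (\<phi> ` U) \<psi>" using h2 homeomorphism_def by blast
  have c: "compact (\<psi> ` cball (\<phi> x) e)"
    by (rule compact_continuous_image[OF continuous_on_subset[OF cont e(2)]]) simp
  have "\<psi> (\<phi> x) = x" using h xU unfolding homeomorphism_def by blast
  hence "x \<in> \<psi> ` ball (\<phi> x) e" using e by (metis centre_in_ball image_eqI)
  thus ?thesis using o c by (intro exI[of _ "\<psi> ` ball (\<phi> x) e"] exI[of _ "\<psi> ` cball (\<phi> x) e"]) auto
qed


lemma compact_nbhd:
  fixes L :: "'m::topological_space set"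
  assumes "\<forall>x::'m. \<exists>W C. open W \<and> x \<in> W \<and> W \<subseteq> C \<and> compact C" "compact L"
  shows "\<exists>W C. open W \<and> L \<subseteq> W \<and> W \<subseteq> C \<and> compact C"
proof -
  from choice[OF assms(1)] obtain Wf where "\<forall>x::'m. \<exists>C. open (Wf x) \<and> x \<in> Wf x \<and> Wf x \<subseteq> C \<and> compact C" ..
  from choice[OF this] obtain Cf where wc: "\<forall>x::'m. open (Wf x) \<and> x \<in> Wf x \<and> Wf x \<subseteq> Cf x \<and> compact (Cf x)" ..
  have "L \<subseteq> (\<Union>x\<in>L. Wf x)" using wc by blast
  moreover have "\<And>x. x \<in> L \<Longrightarrow> open (Wf x)" using wc by blast
  ultimately obtain L' where L': "L' \<subseteq> L" "finite L'" "L \<subseteq> (\<Union>x\<in>L'. Wf x)"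
    using compactE_image[OF assms(2), of L Wf] by blast
  have "open (\<Union>x\<in>L'. Wf x)" using wc by blast
  moreover have "(\<Union>x\<in>L'. Wf x) \<subseteq> (\<Union>x\<in>L'. Cf x)" using wc by blast
  moreover have "compact (\<Union>x\<in>L'. Cf x)" using wc L'(2) by (intro compact_UN) auto
  ultimately show ?thesis using L'(3) by blast
qed

theorem proposition3p1:
  fixes A :: "('m::t2_space set \<times> ('m \<Rightarrow> real^'n)) set"
    and fs :: "nat \<Rightarrow> 'm \<Rightarrow> 'e::{real_vector,t2_space}"
    and f :: "'m \<Rightarrow> 'e"
  assumes "smooth_manifold A"
    and "locally_convex_space TYPE('e)"
    and "\<And>n. smooth_map A (fs n)"
    and "smooth_map A f"
    and "vS_tendsto A fs f"
  shows "\<exists>K N. compact K \<and> (\<forall>n\<ge>N. {y. fs n y \<noteq> f y} \<subseteq> K)"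
proof (rule ccontr)
  assume neg: "\<not> ?thesis"
  from assms(2)[unfolded locally_convex_space_def] obtain P :: "('e \<Rightarrow> real) set" where
    P3: "(\<forall>p\<in>P. seminorm p) \<and> (\<forall>x. x \<noteq> 0 \<longrightarrow> (\<exists>p\<in>P. p x \<noteq> 0)) \<and>
    (\<forall>U :: 'e set. open U \<longleftrightarrow>
           (\<forall>x\<in>U. \<exists>F. finite F \<and> F \<subseteq> P \<and> (\<exists>\<epsilon>>0. {y. \<forall>p\<in>F. p (y - x) < \<epsilon>} \<subseteq> U)))" ..
  from P3 have Psn: "\<forall>p\<in>P. seminorm p" by (rule conjunct1)
  from P3 have Psep: "\<forall>x. x \<noteq> 0 \<longrightarrow> (\<exists>p\<in>P. p x \<noteq> 0)" by (rule conjunct2[THEN conjunct1])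
  from P3 have Ptop: "\<forall>U :: 'e set. open U \<longleftrightarrow>
           (\<forall>x\<in>U. \<exists>F. finite F \<and> F \<subseteq> P \<and> (\<exists>\<epsilon>>0. {y. \<forall>p\<in>F. p (y - x) < \<epsilon>} \<subseteq> U))"
    by (rule conjunct2[THEN conjunct2])
  from assms(1)[unfolded smooth_manifold_def] have M1: "\<exists>Ks :: nat \<Rightarrow> 'm set. (\<forall>i. compact (Ks i)) \<and> (\<Union>i. Ks i) = UNIV"
    and Ach: "\<forall>c\<in>A. is_chart c" and Acov: "(\<Union>c\<in>A. fst c) = UNIV"
    and Acomp: "\<forall>c\<in>A. \<forall>d\<in>A. charts_compatible c d" by auto
  from M1 obtain Ks :: "nat \<Rightarrow> 'm set" where Ks: "\<forall>i. compact (Ks i)" "(\<Union>i. Ks i) = UNIV" by blast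
  have loc: "\<forall>x::'m. \<exists>W C. open W \<and> x \<in> W \<and> W \<subseteq> C \<and> compact C"
  proof
    fix x :: 'm
    obtain c where "c \<in> A" "x \<in> fst c" using Acov by blast
    thus "\<exists>W C. open W \<and> x \<in> W \<and> W \<subseteq> C \<and> compact C"
      using chart_local_compact Ach by blast
  qed
  have "\<forall>k. \<exists>W C. open W \<and> (\<Union>j\<le>k. Ks j) \<subseteq> W \<and> W \<subseteq> C \<and> compact C"
    using compact_nbhd[OF loc] Ks(1) by (simp add: compact_UN)
  from choice[OF this] obtain Wk where "\<forall>k. \<exists>C. open (Wk k) \<and> (\<Union>j\<le>k. Ks j) \<subseteq> Wk k \<and> Wk k \<subseteq> C \<and> compact C" ..
  from choice[OF this] obtain Ck where WC: "\<forall>k. open (Wk k) \<and> (\<Union>j\<le>k. Ks j) \<subseteq> Wk k \<and> Wk k \<subseteq> Ck k \<and> compact (Ck k)" ..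
  define D where "D k = (\<Union>j\<le>k. Ck j)" for k
  have Dc: "compact (D k)" for k unfolding D_def using WC by (auto intro!: compact_UN)
  have Dex: "\<exists>i. x \<in> Wk i \<and> (\<forall>k\<ge>i. Wk i \<subseteq> D k)" for x
  proof -
    obtain i where "x \<in> Ks i" using Ks(2) by blast
    hence "x \<in> Wk i" using WC by blast
    moreover have "\<forall>k\<ge>i. Wk i \<subseteq> D k" unfolding D_def using WC by blast
    ultimately show ?thesis by blast
  qed
  have "\<forall>k. \<exists>n y. n \<ge> k \<and> fs n y \<noteq> f y \<and> y \<notin> D k"
  proof
    fix k
    have "\<not> (\<forall>n\<ge>k. {y. fs n y \<noteq> f y} \<subseteq> D k)" using neg Dc by blast
    thus "\<exists>n y. n \<ge> k \<and> fs n y \<noteq> f y \<and> y \<notin> D k" by blast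
  qed
  from choice[OF this] obtain nn where "\<forall>k. \<exists>y. nn k \<ge> k \<and> fs (nn k) y \<noteq> f y \<and> y \<notin> D k" ..
  from choice[OF this] obtain yy where ny: "\<forall>k. nn k \<ge> k \<and> fs (nn k) (yy k) \<noteq> f (yy k) \<and> yy k \<notin> D k" ..
  have "\<forall>k. \<exists>c p. c \<in> A \<and> yy k \<in> fst c \<and> p \<in> P \<and> p (fs (nn k) (yy k) - f (yy k)) \<noteq> 0"
  proof
    fix k
    obtain c where "c \<in> A" "yy k \<in> fst c" using Acov by blast
    moreover obtain p where "p \<in> P" "p (fs (nn k) (yy k) - f (yy k)) \<noteq> 0"
      using Psep ny by (metis right_minus_eq)
    ultimately show "\<exists>c p. c \<in> A \<and> yy k \<in> fst c \<and> p \<in> P \<and> p (fs (nn k) (yy k) - f (yy k)) \<noteq> 0"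
      by blast
  qed
  from choice[OF this] obtain cc where "\<forall>k. \<exists>p. cc k \<in> A \<and> yy k \<in> fst (cc k) \<and> p \<in> P \<and> p (fs (nn k) (yy k) - f (yy k)) \<noteq> 0" ..
  from choice[OF this] obtain pp where cp: "\<forall>k. cc k \<in> A \<and> yy k \<in> fst (cc k) \<and> pp k \<in> P \<and> pp k (fs (nn k) (yy k) - f (yy k)) \<noteq> 0" ..
  define del where "del k = pp k (fs (nn k) (yy k) - f (yy k))" for k
  have delpos: "del k > 0" for k
    using cp seminorm_nonneg Psn unfolding del_def by (metis order_le_less)
  define g where "g k = ({yy k}, cc k, pp k, 0::nat, del k)" for k
  define S where "S = range g"
  define B where "B = {h. smooth_map A h} \<inter>
            (\<Inter>s\<in>S. case s of (K, c, p, r, \<epsilon>) \<Rightarrow> elem_nbhd A f K c p r \<epsilon>)"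
  have inv: "inv_into (fst (cc k)) (snd (cc k)) (snd (cc k) (yy k)) = yy k" for k
  proof -
    have "is_chart (cc k)" using Ach cp by blast
    hence "homeomorphism (fst (cc k)) (snd (cc k) ` fst (cc k)) (snd (cc k)) (inv_into (fst (cc k)) (snd (cc k)))"
      unfolding is_chart_def by blast
    moreover have "yy k \<in> fst (cc k)" using cp by blast
    ultimately show ?thesis by (rule homeomorphism_apply1)
  qed
  have basic: "basic_nbhd A f B"
    unfolding basic_nbhd_def
  proof (intro conjI assms(4) exI[of _ S])
    show "\<forall>s\<in>S. elem_data_ok A s"
    proof
      fix s assume "s \<in> S"
      then obtain k where s: "s = g k" unfolding S_def by blast
      have "manifold_chart A (cc k)" unfolding manifold_chart_def using Ach Acomp cp by blast
      moreover have "continuous_seminorm (pp k)" using lcs_cont[OF Ptop] cp Psn by blast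
      ultimately show "elem_data_ok A s" unfolding s g_def elem_data_ok_def using cp delpos by auto
    qed
    show "\<forall>x. \<exists>W. open W \<and> x \<in> W \<and> finite {s\<in>S. fst s \<inter> W \<noteq> {}}"
    proof
      fix x
      obtain i where i: "x \<in> Wk i" "\<forall>k\<ge>i. Wk i \<subseteq> D k" using Dex by blast
      have "{s\<in>S. fst s \<inter> Wk i \<noteq> {}} \<subseteq> g ` {..<i}"
      proof
        fix s assume "s \<in> {s\<in>S. fst s \<inter> Wk i \<noteq> {}}"
        hence s0: "s \<in> S" "fst s \<inter> Wk i \<noteq> {}" by auto
        then obtain k where s1: "s = g k" unfolding S_def by blast
        hence "yy k \<in> Wk i" using s0(2) by (simp add: g_def)
        note s = s1 this
        have "k < i" using s(2) i(2) ny by (meson not_less subsetD)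
        thus "s \<in> g ` {..<i}" using s by blast
      qed
      hence "finite {s\<in>S. fst s \<inter> Wk i \<noteq> {}}" by (rule finite_subset) simp
      thus "\<exists>W. open W \<and> x \<in> W \<and> finite {s\<in>S. fst s \<inter> W \<noteq> {}}" using i WC by blast
    qed
  qed (simp add: B_def)
  have fB: "f \<in> B"
    unfolding B_def S_def using assms(4) delpos Psn cp
    by (auto simp: g_def elem_nbhd_def cnorm0 seminorm_zero)
  have "vS_open A B" unfolding vS_open_def using basic by (auto simp: B_def)
  hence "\<forall>\<^sub>F n in sequentially. fs n \<in> B" using assms(5) fB unfolding vS_tendsto_def by blast
  then obtain N where N: "\<forall>n\<ge>N. fs n \<in> B" unfolding eventually_sequentially by blast
  hence "fs (nn N) \<in> B" using ny by blast
  hence "fs (nn N) \<in> elem_nbhd A f {yy N} (cc N) (pp N) 0 (del N)"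
    unfolding B_def S_def g_def by auto
  hence "max 0 (del N) < del N"
    unfolding elem_nbhd_def by (simp add: cnorm0 inv del_def)
  thus False by simp
qed

end
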